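(* Let $p$ be a prime and $G=C_p\times C_p$. Then there are exactly $2^{p+2}+p+1$ $G$-transfer systems. Moreover, the lattice $\mathrm{Tr}(G)$ (ordered by inclusion of relations) is the disjoint union of three subsets $B$, $M$, $T$ where $B$ and $T$ are each (as subposets) isomorphic to the Boolean lattice $[1]^{p+1}$, $M$ consists of $p+1$ elements, and the covering relations of $\mathrm{Tr}(G)$ are exactly the covering relations internal to $B$, the covering relations internal to $T$, and the following: (i) the $p+1$ elements of $B$ covered by $\max B$ are put in bijection with the elements of $M$, and each element of $M$ covers exactly its corresponding element of $B$; (ii) the $p+1$ elements of $T$ covering $\min T$ are put in bijection with the elements of $M$, and each such element of $T$ covers exactly its corresponding element of $M$; (iii) $\min T$ covers $\max B$.
   Context: For a finite lattice $(P,\le)$, a transfer system on $P$ is a partial order $R$ on $P$ refining $\le$ (i.e. $x\,R\,y\Rightarrow x\le y$) that is closed under restriction: if $x\,R\,z$ and $y\le z$ then $(x\wedge y)\,R\,y$. For a finite group $G$, a $G$-transfer system is a transfer system on the subgroup lattice $\mathrm{Sub}(G)$ that is moreover closed under conjugation (if $H\,R\,K$ then $gHg^{-1}\,R\,gKg^{-1}$ for all $g\in G$). $\mathrm{Tr}(G)$ denotes the set of $G$-transfer systems, partially ordered by $R\le R'$ iff every relation of $R$ is a relation of $R'$; it is a lattice. *)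

theory Defs
  imports "HOL-Algebra.Algebra"
begin

definition Sub :: "('a, 'b) monoid_scheme \<Rightarrow> 'a set set" where
  "Sub G = {H. subgroup H G}"

definition conj_set :: "('a, 'b) monoid_scheme \<Rightarrow> 'a \<Rightarrow> 'a set \<Rightarrow> 'a set" where
  "conj_set G g H = (\<lambda>h. g \<otimes>\<^bsub>G\<^esub> h \<otimes>\<^bsub>G\<^esub> inv\<^bsub>G\<^esub> g) ` H"

definition G_transfer_system :: "('a, 'b) monoid_scheme \<Rightarrow> ('a set \<times> 'a set) set \<Rightarrow> bool" where
  "G_transfer_system G R \<longleftrightarrow>
     \<comment> \<open>R refines inclusion on Sub(G)\<close>
     (\<forall>H K. (H, K) \<in> R \<longrightarrow> H \<in> Sub G \<and> K \<in> Sub G \<and> H \<subseteq> K) \<and>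
     \<comment> \<open>R is a partial order on Sub(G)\<close>
     (\<forall>H \<in> Sub G. (H, H) \<in> R) \<and>
     (\<forall>H K. (H, K) \<in> R \<longrightarrow> (K, H) \<in> R \<longrightarrow> H = K) \<and>
     (\<forall>H K L. (H, K) \<in> R \<longrightarrow> (K, L) \<in> R \<longrightarrow> (H, L) \<in> R) \<and>
     \<comment> \<open>closed under restriction\<close>
     (\<forall>H K L. (H, K) \<in> R \<longrightarrow> L \<in> Sub G \<longrightarrow> L \<subseteq> K \<longrightarrow> (H \<inter> L, L) \<in> R) \<and>
     \<comment> \<open>closed under conjugation\<close>
     (\<forall>H K g. (H, K) \<in> R \<longrightarrow> g \<in> carrier G \<longrightarrow> (conj_set G g H, conj_set G g K) \<in> R)"

definition Tr :: "('a, 'b) monoid_scheme \<Rightarrow> ('a set \<times> 'a set) set set" where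
  "Tr G = {R. G_transfer_system G R}"

definition covers_in :: "'c set set \<Rightarrow> 'c set \<Rightarrow> 'c set \<Rightarrow> bool" where
  "covers_in S x y \<longleftrightarrow> x \<in> S \<and> y \<in> S \<and> x \<subset> y \<and> \<not> (\<exists>z \<in> S. x \<subset> z \<and> z \<subset> y)"

text \<open>S (ordered by inclusion) is isomorphic to the Boolean lattice [1]^(n+1), realised
  as the power set of {0..n}; f is an order isomorphism.\<close>
definition bool_iso :: "nat \<Rightarrow> (nat set \<Rightarrow> 'c set) \<Rightarrow> 'c set set \<Rightarrow> bool" where
  "bool_iso n f S \<longleftrightarrow> bij_betw f (Pow {0..n}) S \<and>
     (\<forall>a b. a \<subseteq> {0..n} \<longrightarrow> b \<subseteq> {0..n} \<longrightarrow> (f a \<subseteq> f b \<longleftrightarrow> a \<subseteq> b))"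

definition Cp2 :: "nat \<Rightarrow> (int \<times> int) monoid" where
  "Cp2 p = integer_mod_group p \<times>\<times> integer_mod_group p"

end

theory Submission
  imports Defs "HOL-Number_Theory.Cong"
begin

definition ts :: "'a set set \<Rightarrow> ('a set \<times> 'a set) set \<Rightarrow> bool" where
  "ts S R \<longleftrightarrow>
     (\<forall>H K. (H, K) \<in> R \<longrightarrow> H \<in> S \<and> K \<in> S \<and> H \<subseteq> K) \<and>
     (\<forall>H \<in> S. (H, H) \<in> R) \<and>
     (\<forall>H K. (H, K) \<in> R \<longrightarrow> (K, H) \<in> R \<longrightarrow> H = K) \<and>
     (\<forall>H K L. (H, K) \<in> R \<longrightarrow> (K, L) \<in> R \<longrightarrow> (H, L) \<in> R) \<and>
     (\<forall>H K L. (H, K) \<in> R \<longrightarrow> L \<in> S \<longrightarrow> L \<subseteq> K \<longrightarrow> (H \<inter> L, L) \<in> R)"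

locale tsys =
  fixes S :: "'a set set" and e g :: "'a set" and L :: "nat \<Rightarrow> 'a set" and p :: nat
  assumes S_eq: "S = {e, g} \<union> L ` {0..p}"
  and Linj: "inj_on L {0..p}"
  and eL: "\<And>i. i \<le> p \<Longrightarrow> e \<subseteq> L i \<and> e \<noteq> L i"
  and Lg: "\<And>i. i \<le> p \<Longrightarrow> L i \<subseteq> g \<and> L i \<noteq> g"
  and LL: "\<And>i j. i \<le> p \<Longrightarrow> j \<le> p \<Longrightarrow> i \<noteq> j \<Longrightarrow> L i \<inter> L j = e"
begin

abbreviation "N \<equiv> {0..p}"

lemma eg: "e \<subseteq> g" "e \<noteq> g" using eL[of 0] Lg[of 0] by auto

lemma Lne: "i \<le> p \<Longrightarrow> L i \<noteq> e" "i \<le> p \<Longrightarrow> L i \<noteq> g"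
  "i \<le> p \<Longrightarrow> e \<noteq> L i" "i \<le> p \<Longrightarrow> g \<noteq> L i"
  using eL Lg by force+

lemma eLs[simp]: "i \<le> p \<Longrightarrow> e \<subseteq> L i" using eL by blast
lemma Lgs[simp]: "i \<le> p \<Longrightarrow> L i \<subseteq> g" using Lg by blast
lemma int_simps[simp]: "i \<le> p \<Longrightarrow> L i \<inter> e = e" "i \<le> p \<Longrightarrow> e \<inter> L i = e"
  "i \<le> p \<Longrightarrow> L i \<inter> g = L i" "i \<le> p \<Longrightarrow> g \<inter> L i = L i"
  using eLs Lgs by blast+

lemma Leq: "i \<le> p \<Longrightarrow> j \<le> p \<Longrightarrow> L i = L j \<longleftrightarrow> i = j"
  using Linj by (auto simp: inj_on_def)

lemma Lsub: "i \<le> p \<Longrightarrow> j \<le> p \<Longrightarrow> L i \<subseteq> L j \<longleftrightarrow> i = j"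
  using LL[of i j] eL[of i] by auto

definition rel :: "nat set \<Rightarrow> nat set \<Rightarrow> bool \<Rightarrow> ('a set \<times> 'a set) set" where
  "rel U W c = Id_on S \<union> (\<lambda>i. (e, L i)) ` U \<union> (\<lambda>i. (L i, g)) ` W \<union> (if c then {(e, g)} else {})"

lemma mem_eL: "i \<le> p \<Longrightarrow> U \<subseteq> N \<Longrightarrow> (e, L i) \<in> rel U W c \<longleftrightarrow> i \<in> U"
  unfolding rel_def using Lne eg by (auto simp: Leq subset_iff)

lemma mem_Lg: "i \<le> p \<Longrightarrow> W \<subseteq> N \<Longrightarrow> (L i, g) \<in> rel U W c \<longleftrightarrow> i \<in> W"
  unfolding rel_def using Lne eg by (auto simp: Leq subset_iff)

lemma mem_eg: "U \<subseteq> N \<Longrightarrow> W \<subseteq> N \<Longrightarrow> (e, g) \<in> rel U W c \<longleftrightarrow> c"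
  unfolding rel_def using Lne eg by (auto simp: subset_iff)

lemma rel_sub:
  assumes "U \<subseteq> N" "W \<subseteq> N" "U' \<subseteq> N" "W' \<subseteq> N"
  shows "rel U W c \<subseteq> rel U' W' c' \<longleftrightarrow> U \<subseteq> U' \<and> W \<subseteq> W' \<and> (c \<longrightarrow> c')"
proof
  assume h: "rel U W c \<subseteq> rel U' W' c'"
  have "U \<subseteq> U'"
  proof
    fix i assume "i \<in> U"
    with assms have "i \<le> p" by auto
    with \<open>i \<in> U\<close> assms h show "i \<in> U'" using mem_eL by blast
  qed
  moreover have "W \<subseteq> W'"
  proof
    fix i assume "i \<in> W"
    with assms have "i \<le> p" by auto
    with \<open>i \<in> W\<close> assms h show "i \<in> W'" using mem_Lg by blast
  qed
  moreover have "c \<longrightarrow> c'" using h mem_eg assms by blast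
  ultimately show "U \<subseteq> U' \<and> W \<subseteq> W' \<and> (c \<longrightarrow> c')" by blast
next
  assume "U \<subseteq> U' \<and> W \<subseteq> W' \<and> (c \<longrightarrow> c')"
  then show "rel U W c \<subseteq> rel U' W' c'" unfolding rel_def by auto
qed

lemma rel_eq:
  assumes "U \<subseteq> N" "W \<subseteq> N" "U' \<subseteq> N" "W' \<subseteq> N"
  shows "rel U W c = rel U' W' c' \<longleftrightarrow> U = U' \<and> W = W' \<and> c = c'"
  using rel_sub[OF assms] rel_sub[OF assms(3,4,1,2)] by (auto simp: set_eq_subset)

definition adm :: "nat set \<Rightarrow> nat set \<Rightarrow> bool \<Rightarrow> bool" where
  "adm U W c \<longleftrightarrow> U \<subseteq> N \<and> W \<subseteq> N \<and>
     ((W = {} \<and> \<not> c) \<or> (U = N \<and> c) \<or> (\<exists>i\<in>N. U = N - {i} \<and> W = {i} \<and> \<not> c))"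

lemma S_cases: "H \<in> S \<Longrightarrow> (H = e \<Longrightarrow> P) \<Longrightarrow> (H = g \<Longrightarrow> P) \<Longrightarrow> (\<And>i. i \<le> p \<Longrightarrow> H = L i \<Longrightarrow> P) \<Longrightarrow> P"
  using S_eq by auto

lemma eS: "e \<in> S" and gS: "g \<in> S" and LS: "i \<le> p \<Longrightarrow> L i \<in> S"
  using S_eq by auto

lemma S_sub_g: "H \<in> S \<Longrightarrow> H \<subseteq> g" by (erule S_cases) (use eg in auto)
lemma e_sub_S: "H \<in> S \<Longrightarrow> e \<subseteq> H" by (erule S_cases) (use eg in auto)

lemma ts_rel:
  assumes "ts S R"
  shows "R = rel {i\<in>N. (e, L i) \<in> R} {i\<in>N. (L i, g) \<in> R} ((e, g) \<in> R)"
proof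
  show "R \<subseteq> rel {i\<in>N. (e, L i) \<in> R} {i\<in>N. (L i, g) \<in> R} ((e, g) \<in> R)"
  proof
    fix x assume x: "x \<in> R"
    obtain H K where xHK: "x = (H, K)" by fastforce
    have HK: "H \<in> S" "K \<in> S" "H \<subseteq> K" using assms x xHK unfolding ts_def by auto
    show "x \<in> rel {i\<in>N. (e, L i) \<in> R} {i\<in>N. (L i, g) \<in> R} ((e, g) \<in> R)"
    proof (cases "H = K")
      case True then show ?thesis using HK xHK unfolding rel_def by auto
    next
      case False
      show ?thesis
        using HK(1)
      proof (rule S_cases)
        assume "H = e"
        show ?thesis using HK(2)
        proof (rule S_cases)
          assume "K = e" then show ?thesis using False \<open>H = e\<close> by simp
        next
          assume "K = g" then show ?thesis using x xHK \<open>H = e\<close> unfolding rel_def by auto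
        next
          fix i assume "i \<le> p" "K = L i" then show ?thesis using x xHK \<open>H = e\<close> unfolding rel_def by auto
        qed
      next
        assume "H = g"
        then have "K = g" using HK S_sub_g by blast
        then show ?thesis using False \<open>H = g\<close> by simp
      next
        fix i assume i: "i \<le> p" "H = L i"
        show ?thesis using HK(2)
        proof (rule S_cases)
          assume "K = e" then show ?thesis using HK i eL by blast
        next
          assume "K = g" then show ?thesis using x xHK i unfolding rel_def by auto
        next
          fix j assume "j \<le> p" "K = L j" then show ?thesis using HK i Lsub False by blast
        qed
      qed
    qed
  qed
next
  show "rel {i\<in>N. (e, L i) \<in> R} {i\<in>N. (L i, g) \<in> R} ((e, g) \<in> R) \<subseteq> R"
    using assms unfolding rel_def ts_def by auto
qed

lemma rel_mem_cases:
  assumes "x \<in> rel U W c"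
  obtains H where "H \<in> S" "x = (H, H)"
   | i where "i \<in> U" "x = (e, L i)"
   | i where "i \<in> W" "x = (L i, g)"
   | "c" "x = (e, g)"
  using assms unfolding rel_def by (auto split: if_splits)

lemma rel_Id: "H \<in> S \<Longrightarrow> (H, H) \<in> rel U W c"
  unfolding rel_def by auto
lemma rel_eL: "i \<in> U \<Longrightarrow> (e, L i) \<in> rel U W c"
  unfolding rel_def by auto
lemma rel_Lg: "i \<in> W \<Longrightarrow> (L i, g) \<in> rel U W c"
  unfolding rel_def by auto
lemma rel_eg: "c \<Longrightarrow> (e, g) \<in> rel U W c"
  unfolding rel_def by auto

lemma adm_ts:
  assumes a: "adm U W c"
  shows "ts S (rel U W c)"
proof -
  have UN: "U \<subseteq> N" and WN: "W \<subseteq> N" using a unfolding adm_def by auto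
  have ref: "\<And>H K. (H, K) \<in> rel U W c \<Longrightarrow> H \<in> S \<and> K \<in> S \<and> H \<subseteq> K"
  proof -
    fix H K assume "(H, K) \<in> rel U W c"
    then show "H \<in> S \<and> K \<in> S \<and> H \<subseteq> K"
    proof (cases rule: rel_mem_cases)
      case (2 i) then have "i \<le> p" using UN by auto
      then show ?thesis using 2 eS LS eL by auto
    next
      case (3 i) then have "i \<le> p" using WN by auto
      then show ?thesis using 3 gS LS Lg by auto
    next
      case 4 then show ?thesis using eS gS eg by auto
    qed auto
  qed
  have tr: "\<And>H K M. (H, K) \<in> rel U W c \<Longrightarrow> (K, M) \<in> rel U W c \<Longrightarrow> (H, M) \<in> rel U W c"
  proof -
    fix H K M assume hk: "(H, K) \<in> rel U W c" and km: "(K, M) \<in> rel U W c"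
    show "(H, M) \<in> rel U W c"
    proof (cases "H = K \<or> K = M")
      case True then show ?thesis using hk km by auto
    next
      case False
      from hk show ?thesis
      proof (cases rule: rel_mem_cases)
        case (1 H') then show ?thesis using False by auto
      next
        case h2: (2 i)
        have ip: "i \<le> p" using h2 UN by auto
        from km show ?thesis
        proof (cases rule: rel_mem_cases)
          case (1 H') then show ?thesis using False by auto
        next
          case (2 j) then have "L i = e" using h2 by auto
          then show ?thesis using Lne(1)[OF ip] by blast
        next
          case (3 j)
          then have jp: "j \<le> p" using WN by auto
          have "L j = L i" using h2 3 by auto
          then have "i = j" using Leq[OF jp ip] by auto
          then have "c" using a h2 3 unfolding adm_def by auto
          then show ?thesis using h2 3 rel_eg by auto
        next
          case 4 then have "L i = e" using h2 by auto
          then show ?thesis using Lne(1)[OF ip] by blast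
        qed
      next
        case h3: (3 i)
        have Kg: "K = g" using h3 by auto
        from km show ?thesis
        proof (cases rule: rel_mem_cases)
          case (1 H') then show ?thesis using False by auto
        next
          case (2 j) then have "g = e" using Kg by auto
          then show ?thesis using eg by blast
        next
          case (3 j) then have jp: "j \<le> p" using WN by auto
          have "L j = g" using 3 Kg by auto
          then show ?thesis using Lne(2)[OF jp] by blast
        next
          case 4 then have "g = e" using Kg by auto
          then show ?thesis using eg by blast
        qed
      next
        case h4: 4
        have Kg: "K = g" using h4 by auto
        from km show ?thesis
        proof (cases rule: rel_mem_cases)
          case (1 H') then show ?thesis using False by auto
        next
          case (2 j) then have "g = e" using Kg by auto
          then show ?thesis using eg by blast
        next
          case (3 j) then have jp: "j \<le> p" using WN by auto
          have "L j = g" using 3 Kg by auto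
          then show ?thesis using Lne(2)[OF jp] by blast
        next
          case 4 then have "g = e" using Kg by auto
          then show ?thesis using eg by blast
        qed
      qed
    qed
  qed
  have rs: "\<And>H K M. (H, K) \<in> rel U W c \<Longrightarrow> M \<in> S \<Longrightarrow> M \<subseteq> K \<Longrightarrow> (H \<inter> M, M) \<in> rel U W c"
  proof -
    fix H K M assume hk: "(H, K) \<in> rel U W c" and M: "M \<in> S" "M \<subseteq> K"
    from hk show "(H \<inter> M, M) \<in> rel U W c"
    proof (cases rule: rel_mem_cases)
      case (1 H')
      then have "H \<inter> M = M" using M by auto
      then show ?thesis using M rel_Id by auto
    next
      case (2 i)
      have "i \<le> p" using 2 UN by auto
      have "H \<inter> M = e" using 2 M e_sub_S by auto
      show ?thesis using M(1)
      proof (rule S_cases)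
        assume "M = g" then have "g \<subseteq> L i" using M 2 by auto
        then have "L i = g" using Lgs[OF \<open>i \<le> p\<close>] by blast
        then show ?thesis using Lne(2)[OF \<open>i \<le> p\<close>] by blast
      next
        fix j assume j: "j \<le> p" "M = L j"
        then have "j = i" using M 2 \<open>i \<le> p\<close> Lsub by auto
        then show ?thesis using \<open>H \<inter> M = e\<close> j 2 rel_eL by auto
      qed (use \<open>H \<inter> M = e\<close> rel_Id eS in auto)
    next
      case (3 i)
      have "i \<le> p" using 3 WN by auto
      show ?thesis using M(1)
      proof (rule S_cases)
        assume "M = e"
        have "L i \<inter> e = e" using eL[OF \<open>i \<le> p\<close>] by auto
        then show ?thesis using 3 \<open>M = e\<close> rel_Id eS by auto
      next
        assume "M = g"
        have "L i \<inter> g = L i" using \<open>i \<le> p\<close> by simp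
        then show ?thesis using 3 \<open>M = g\<close> rel_Lg by auto
      next
        fix j assume j: "j \<le> p" "M = L j"
        show ?thesis
        proof (cases "j = i")
          case True then show ?thesis using j 3 rel_Id LS by auto
        next
          case False
          then have "j \<in> U" using a 3 j unfolding adm_def by auto
          then show ?thesis using j 3 LL[of i j] \<open>i \<le> p\<close> False rel_eL by auto
        qed
      qed
    next
      case 4
      have "H \<inter> M = e" using 4 M e_sub_S by auto
      show ?thesis using M(1)
      proof (rule S_cases)
        assume "M = g" then show ?thesis using 4 \<open>H \<inter> M = e\<close> rel_eg by auto
      next
        fix j assume j: "j \<le> p" "M = L j"
        then have "j \<in> U" using a 4 unfolding adm_def by auto
        then show ?thesis using \<open>H \<inter> M = e\<close> j rel_eL by auto
      qed (use \<open>H \<inter> M = e\<close> rel_Id eS in auto)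
    qed
  qed
  show ?thesis unfolding ts_def
  proof (intro conjI allI impI ballI)
    fix H K assume "(H, K) \<in> rel U W c" then show "H \<in> S" "K \<in> S" "H \<subseteq> K" using ref by auto
  next
    fix H assume "H \<in> S" then show "(H, H) \<in> rel U W c" by (rule rel_Id)
  next
    fix H K assume "(H, K) \<in> rel U W c" "(K, H) \<in> rel U W c" then show "H = K" using ref by blast
  next
    fix H K M assume "(H, K) \<in> rel U W c" "(K, M) \<in> rel U W c" then show "(H, M) \<in> rel U W c" by (rule tr)
  next
    fix H K M assume "(H, K) \<in> rel U W c" "M \<in> S" "M \<subseteq> K" then show "(H \<inter> M, M) \<in> rel U W c" by (rule rs)
  qed
qed

lemma ts_adm:
  assumes t: "ts S R"
  shows "adm {i\<in>N. (e, L i) \<in> R} {i\<in>N. (L i, g) \<in> R} ((e, g) \<in> R)"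
proof -
  let ?U = "{i\<in>N. (e, L i) \<in> R}" and ?W = "{i\<in>N. (L i, g) \<in> R}" and ?c = "(e, g) \<in> R"
  have rs: "\<And>H K M. (H, K) \<in> R \<Longrightarrow> M \<in> S \<Longrightarrow> M \<subseteq> K \<Longrightarrow> (H \<inter> M, M) \<in> R"
    and tr: "\<And>H K M. (H, K) \<in> R \<Longrightarrow> (K, M) \<in> R \<Longrightarrow> (H, M) \<in> R"
    using t unfolding ts_def by blast+
  have "(?W = {} \<and> \<not> ?c) \<or> (?U = N \<and> ?c) \<or> (\<exists>i\<in>N. ?U = N - {i} \<and> ?W = {i} \<and> \<not> ?c)"
  proof (cases ?c)
    case True
    have "N \<subseteq> ?U"
    proof
      fix i assume "i \<in> N"
      then have ip: "i \<le> p" by auto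
      have "(e \<inter> L i, L i) \<in> R" using rs[OF True LS[OF ip] Lgs[OF ip]] .
      moreover have "e \<inter> L i = e" using ip by simp
      ultimately show "i \<in> ?U" using \<open>i \<in> N\<close> by auto
    qed
    then have "?U = N" by auto
    then show ?thesis using True by auto
  next
    case False
    show ?thesis
    proof (cases "?W = {}")
      case True then show ?thesis using False by auto
    next
      case nW: False
      then obtain i where i: "i \<in> N" "(L i, g) \<in> R" by auto
      have other: "j \<in> ?U" if "j \<in> N" "j \<noteq> i" for j
      proof -
        have "(L i \<inter> L j, L j) \<in> R" using rs[OF i(2)] LS Lg that by auto
        then show ?thesis using LL[of i j] that i by auto
      qed
      have iU: "i \<notin> ?U" using tr i False by auto
      have "?W = {i}"
      proof (rule ccontr)
        assume "?W \<noteq> {i}"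
        then obtain k where "k \<in> ?W" "k \<noteq> i" using i by auto
        then have "(L k, g) \<in> R" "k \<in> N" by auto
        have "(L k \<inter> L i, L i) \<in> R" using rs[OF \<open>(L k, g) \<in> R\<close>] LS Lg i by auto
        then have "i \<in> ?U" using LL[of k i] \<open>k \<in> N\<close> \<open>k \<noteq> i\<close> i by auto
        then show False using iU by auto
      qed
      moreover have "?U = N - {i}" using other iU by auto
      ultimately show ?thesis using i False by auto
    qed
  qed
  moreover have "?U \<subseteq> N" "?W \<subseteq> N" by auto
  ultimately show ?thesis unfolding adm_def by blast
qed

lemma ts_iff: "ts S R \<longleftrightarrow> (\<exists>U W c. adm U W c \<and> R = rel U W c)"
proof
  assume "ts S R" then show "\<exists>U W c. adm U W c \<and> R = rel U W c"
    using ts_adm ts_rel by blast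
next
  assume "\<exists>U W c. adm U W c \<and> R = rel U W c"
  then show "ts S R" using adm_ts by blast
qed


definition fB :: "nat set \<Rightarrow> ('a set \<times> 'a set) set" where "fB U = rel U {} False"
definition fT :: "nat set \<Rightarrow> ('a set \<times> 'a set) set" where "fT W = rel N W True"
definition mM :: "nat \<Rightarrow> ('a set \<times> 'a set) set" where "mM i = rel (N - {i}) {i} False"
definition "Bs = fB ` Pow N"
definition "Ms = mM ` N"
definition "Ts = fT ` Pow N"
definition "phi m = m - (\<lambda>i. (L i, g)) ` N"
definition "psi m = m \<union> {(e, g)} \<union> (\<lambda>j. (e, L j)) ` N"

lemma le_BB[simp]: "U \<subseteq> N \<Longrightarrow> U' \<subseteq> N \<Longrightarrow> fB U \<subseteq> fB U' \<longleftrightarrow> U \<subseteq> U'"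
  unfolding fB_def by (subst rel_sub) auto
lemma le_BM[simp]: "U \<subseteq> N \<Longrightarrow> i \<in> N \<Longrightarrow> fB U \<subseteq> mM i \<longleftrightarrow> U \<subseteq> N - {i}"
  unfolding fB_def mM_def by (subst rel_sub) auto
lemma le_BT[simp]: "U \<subseteq> N \<Longrightarrow> W \<subseteq> N \<Longrightarrow> fB U \<subseteq> fT W"
  unfolding fB_def fT_def by (subst rel_sub) auto
lemma le_MB[simp]: "U \<subseteq> N \<Longrightarrow> i \<in> N \<Longrightarrow> \<not> mM i \<subseteq> fB U"
  unfolding fB_def mM_def by (subst rel_sub) auto
lemma le_MM[simp]: "i \<in> N \<Longrightarrow> j \<in> N \<Longrightarrow> mM i \<subseteq> mM j \<longleftrightarrow> i = j"
  unfolding mM_def by (subst rel_sub) auto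
lemma le_MT[simp]: "i \<in> N \<Longrightarrow> W \<subseteq> N \<Longrightarrow> mM i \<subseteq> fT W \<longleftrightarrow> i \<in> W"
  unfolding mM_def fT_def by (subst rel_sub) auto
lemma le_TB[simp]: "U \<subseteq> N \<Longrightarrow> W \<subseteq> N \<Longrightarrow> \<not> fT W \<subseteq> fB U"
  unfolding fB_def fT_def by (subst rel_sub) auto
lemma le_TM[simp]: "i \<in> N \<Longrightarrow> W \<subseteq> N \<Longrightarrow> \<not> fT W \<subseteq> mM i"
  unfolding mM_def fT_def by (subst rel_sub) auto
lemma le_TT[simp]: "W \<subseteq> N \<Longrightarrow> W' \<subseteq> N \<Longrightarrow> fT W \<subseteq> fT W' \<longleftrightarrow> W \<subseteq> W'"
  unfolding fT_def by (subst rel_sub) auto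

lemma eq_BB[simp]: "U \<subseteq> N \<Longrightarrow> U' \<subseteq> N \<Longrightarrow> fB U = fB U' \<longleftrightarrow> U = U'"
  unfolding fB_def by (subst rel_eq) auto
lemma eq_TT[simp]: "W \<subseteq> N \<Longrightarrow> W' \<subseteq> N \<Longrightarrow> fT W = fT W' \<longleftrightarrow> W = W'"
  unfolding fT_def by (subst rel_eq) auto
lemma eq_MM[simp]: "i \<in> N \<Longrightarrow> j \<in> N \<Longrightarrow> mM i = mM j \<longleftrightarrow> i = j"
  unfolding mM_def by (subst rel_eq) auto
lemma neq_BM[simp]: "U \<subseteq> N \<Longrightarrow> i \<in> N \<Longrightarrow> fB U \<noteq> mM i"
  unfolding fB_def mM_def by (subst rel_eq) auto
lemma neq_BT[simp]: "U \<subseteq> N \<Longrightarrow> W \<subseteq> N \<Longrightarrow> fB U \<noteq> fT W"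
  unfolding fB_def fT_def by (subst rel_eq) auto
lemma neq_MT[simp]: "i \<in> N \<Longrightarrow> W \<subseteq> N \<Longrightarrow> mM i \<noteq> fT W"
  unfolding mM_def fT_def by (subst rel_eq) auto
lemma neq_MB[simp]: "U \<subseteq> N \<Longrightarrow> i \<in> N \<Longrightarrow> mM i \<noteq> fB U"
  using neq_BM by metis
lemma neq_TB[simp]: "U \<subseteq> N \<Longrightarrow> W \<subseteq> N \<Longrightarrow> fT W \<noteq> fB U"
  using neq_BT by metis
lemma neq_TM[simp]: "i \<in> N \<Longrightarrow> W \<subseteq> N \<Longrightarrow> fT W \<noteq> mM i"
  using neq_MT by metis

lemma Tr_eq: "{R. ts S R} = Bs \<union> Ms \<union> Ts"
proof (intro Set.set_eqI iffI)
  fix R assume "R \<in> {R. ts S R}"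
  then obtain U W c where a: "adm U W c" and R: "R = rel U W c" using ts_iff by auto
  have UN: "U \<subseteq> N" "W \<subseteq> N" using a unfolding adm_def by auto
  have "(W = {} \<and> \<not> c) \<or> (U = N \<and> c) \<or> (\<exists>i\<in>N. U = N - {i} \<and> W = {i} \<and> \<not> c)"
    using a unfolding adm_def by blast
  then show "R \<in> Bs \<union> Ms \<union> Ts"
  proof (elim disjE)
    assume "W = {} \<and> \<not> c" then show ?thesis using R UN unfolding Bs_def fB_def by auto
  next
    assume "U = N \<and> c" then show ?thesis using R UN unfolding Ts_def fT_def by auto
  next
    assume "\<exists>i\<in>N. U = N - {i} \<and> W = {i} \<and> \<not> c" then show ?thesis using R unfolding Ms_def mM_def by auto
  qed
next
  fix R assume R: "R \<in> Bs \<union> Ms \<union> Ts"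
  have "\<exists>U W c. adm U W c \<and> R = rel U W c"
  proof -
    consider (b) U where "U \<subseteq> N" "R = fB U" | (m) i where "i \<in> N" "R = mM i"
      | (t) W where "W \<subseteq> N" "R = fT W"
      using R unfolding Bs_def Ms_def Ts_def by blast
    then show ?thesis
    proof cases
      case b then have "adm U {} False \<and> R = rel U {} False" unfolding adm_def fB_def by simp
      then show ?thesis by blast
    next
      case m then have "adm (N - {i}) {i} False \<and> R = rel (N - {i}) {i} False" unfolding adm_def mM_def by blast
      then show ?thesis by blast
    next
      case t then have "adm N W True \<and> R = rel N W True" unfolding adm_def fT_def by simp
      then show ?thesis by blast
    qed
  qed
  then show "R \<in> {R. ts S R}" using ts_iff by auto
qed

lemma Tr_cases:
  assumes "R \<in> {R. ts S R}"
  obtains U where "U \<subseteq> N" "R = fB U" | i where "i \<in> N" "R = mM i" | W where "W \<subseteq> N" "R = fT W"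
  using assms unfolding Tr_eq Bs_def Ms_def Ts_def by auto

lemma disj: "Bs \<inter> Ms = {}" "Bs \<inter> Ts = {}" "Ms \<inter> Ts = {}"
  unfolding Bs_def Ms_def Ts_def by auto

lemma finN: "finite N" by simp
lemma cardN: "card N = p + 1" by simp

lemma inj_fB: "inj_on fB (Pow N)" by (auto simp: inj_on_def)
lemma inj_fT: "inj_on fT (Pow N)" by (auto simp: inj_on_def)
lemma inj_mM: "inj_on mM N" by (auto simp: inj_on_def)

lemma card_B: "card Bs = 2 ^ (p + 1)"
  unfolding Bs_def using card_image[OF inj_fB] card_Pow[of N] by simp
lemma card_T: "card Ts = 2 ^ (p + 1)"
  unfolding Ts_def using card_image[OF inj_fT] card_Pow[of N] by simp
lemma card_M: "card Ms = p + 1"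
  unfolding Ms_def using card_image[OF inj_mM] by simp

lemma card_Tr: "card {R. ts S R} = 2 ^ (p + 2) + p + 1"
proof -
  have f: "finite Bs" "finite Ms" "finite Ts" unfolding Bs_def Ms_def Ts_def by auto
  have "card (Bs \<union> Ms \<union> Ts) = card Bs + card Ms + card Ts"
    using f disj by (simp add: card_Un_disjoint Int_Un_distrib2)
  then show ?thesis unfolding Tr_eq using card_B card_M card_T by simp
qed

lemma iso_B: "bool_iso p fB Bs"
  unfolding bool_iso_def Bs_def
  using inj_fB le_BB by (auto simp: bij_betw_def)
lemma iso_T: "bool_iso p fT Ts"
  unfolding bool_iso_def Ts_def
  using inj_fT le_TT by (auto simp: bij_betw_def)

lemma rel_minus: "U \<subseteq> N \<Longrightarrow> W \<subseteq> N \<Longrightarrow> rel U W c - (\<lambda>i. (L i, g)) ` N = rel U {} c"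
proof (intro Set.set_eqI iffI)
  fix x assume U: "U \<subseteq> N" and W: "W \<subseteq> N" and x: "x \<in> rel U W c - (\<lambda>i. (L i, g)) ` N"
  then have x1: "x \<in> rel U W c" and x2: "x \<notin> (\<lambda>i. (L i, g)) ` N" by auto
  from x1 show "x \<in> rel U {} c"
  proof (cases rule: rel_mem_cases)
    case (3 i) then show ?thesis using x2 W by auto
  qed (auto intro: rel_Id rel_eL rel_eg)
next
  fix x assume U: "U \<subseteq> N" and W: "W \<subseteq> N" and x: "x \<in> rel U {} c"
  have x1: "x \<in> rel U W c" using x unfolding rel_def by auto
  have x2: "x \<notin> (\<lambda>i. (L i, g)) ` N"
  proof
    assume "x \<in> (\<lambda>i. (L i, g)) ` N"
    then obtain j where j: "j \<le> p" "x = (L j, g)" by auto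
    from x show False
    proof (cases rule: rel_mem_cases)
      case (1 H) then have "L j = g" using j by auto
      then show False using Lne(2)[OF j(1)] by blast
    next
      case (2 i) then have "L j = e" using j by auto
      then show False using Lne(1)[OF j(1)] by blast
    next
      case 3 then show False by auto
    next
      case 4 then have "L j = e" using j by auto
      then show False using Lne(1)[OF j(1)] by blast
    qed
  qed
  show "x \<in> rel U W c - (\<lambda>i. (L i, g)) ` N" using x1 x2 by blast
qed

lemma phi_mM: "i \<in> N \<Longrightarrow> phi (mM i) = fB (N - {i})"
  unfolding phi_def mM_def fB_def by (rule rel_minus) auto
lemma psi_mM: "i \<in> N \<Longrightarrow> psi (mM i) = fT {i}"
  unfolding psi_def mM_def fT_def rel_def by auto

lemma pow_top: "U \<subseteq> N \<Longrightarrow> (U \<subset> N \<and> \<not> (\<exists>Z\<subseteq>N. U \<subset> Z \<and> Z \<subset> N)) \<longleftrightarrow> (\<exists>i\<in>N. U = N - {i})"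
proof
  assume U: "U \<subseteq> N" and h: "U \<subset> N \<and> \<not> (\<exists>Z\<subseteq>N. U \<subset> Z \<and> Z \<subset> N)"
  then have "\<exists>i. i \<in> N \<and> i \<notin> U" by blast
  then obtain i where i: "i \<in> N" "i \<notin> U" by blast
  have "insert i U \<subseteq> N" "U \<subset> insert i U" using i U by auto
  then have "insert i U = N" using h by auto
  then show "\<exists>i\<in>N. U = N - {i}" using i by auto
next
  assume "U \<subseteq> N" "\<exists>i\<in>N. U = N - {i}"
  then show "U \<subset> N \<and> \<not> (\<exists>Z\<subseteq>N. U \<subset> Z \<and> Z \<subset> N)" by auto
qed

lemma pow_bot: "W \<subseteq> N \<Longrightarrow> ({} \<subset> W \<and> \<not> (\<exists>Z\<subseteq>N. {} \<subset> Z \<and> Z \<subset> W)) \<longleftrightarrow> (\<exists>i\<in>N. W = {i})"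
proof
  assume W: "W \<subseteq> N" and h: "{} \<subset> W \<and> \<not> (\<exists>Z\<subseteq>N. {} \<subset> Z \<and> Z \<subset> W)"
  then obtain i where i: "i \<in> W" by auto
  have "{i} \<subseteq> N" "{} \<subset> {i}" "{i} \<subseteq> W" using i W by auto
  then have "{i} = W" using h by blast
  then show "\<exists>i\<in>N. W = {i}" using i W by auto
next
  assume "W \<subseteq> N" "\<exists>i\<in>N. W = {i}"
  then show "{} \<subset> W \<and> \<not> (\<exists>Z\<subseteq>N. {} \<subset> Z \<and> Z \<subset> W)" by auto
qed

lemma covB_top: "{b. covers_in Bs b (fB N)} = (\<lambda>i. fB (N - {i})) ` N"
proof (intro Set.set_eqI iffI)
  fix b assume "b \<in> {b. covers_in Bs b (fB N)}"
  then have c: "covers_in Bs b (fB N)" by simp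
  then obtain U where U: "U \<subseteq> N" "b = fB U" unfolding covers_in_def Bs_def by auto
  have "U \<subset> N \<and> \<not> (\<exists>Z\<subseteq>N. U \<subset> Z \<and> Z \<subset> N)"
  proof -
    have "U \<subset> N" using c U le_BB[of U N] le_BB[of N U] unfolding covers_in_def by auto
    moreover have "\<not> (\<exists>Z\<subseteq>N. U \<subset> Z \<and> Z \<subset> N)"
    proof
      assume "\<exists>Z\<subseteq>N. U \<subset> Z \<and> Z \<subset> N"
      then obtain Z where Z: "Z \<subseteq> N" "U \<subset> Z" "Z \<subset> N" by auto
      have "fB Z \<in> Bs" using Z unfolding Bs_def by auto
      moreover have "fB U \<subset> fB Z" "fB Z \<subset> fB N" using Z U le_BB by (auto simp: psubset_eq)
      ultimately show False using c U unfolding covers_in_def by auto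
    qed
    ultimately show ?thesis by auto
  qed
  then have "\<exists>j\<in>N. U = N - {j}" by (rule iffD1[OF pow_top[OF U(1)]])
  then obtain j where "j \<in> N" "U = N - {j}" by (rule bexE)
  then show "b \<in> (\<lambda>i. fB (N - {i})) ` N" using U by blast
next
  fix b assume "b \<in> (\<lambda>i. fB (N - {i})) ` N"
  then obtain i where i: "i \<in> N" "b = fB (N - {i})" by auto
  have "\<exists>j\<in>N. N - {i} = N - {j}" using i by blast
  then have "N - {i} \<subset> N \<and> \<not> (\<exists>Z\<subseteq>N. N - {i} \<subset> Z \<and> Z \<subset> N)"
    by (rule iffD2[OF pow_top[of "N - {i}"], rotated]) auto
  then show "b \<in> {b. covers_in Bs b (fB N)}"
    unfolding covers_in_def Bs_def using i le_BB by (auto simp: psubset_eq)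
qed

lemma covT_bot: "{t. covers_in Ts (fT {}) t} = (\<lambda>i. fT {i}) ` N"
proof (intro Set.set_eqI iffI)
  fix t assume "t \<in> {t. covers_in Ts (fT {}) t}"
  then have c: "covers_in Ts (fT {}) t" by simp
  then obtain W where W: "W \<subseteq> N" "t = fT W" unfolding covers_in_def Ts_def by auto
  have "{} \<subset> W \<and> \<not> (\<exists>Z\<subseteq>N. {} \<subset> Z \<and> Z \<subset> W)"
  proof -
    have "{} \<subset> W" using c W le_TT[of W "{}"] unfolding covers_in_def by auto
    moreover have "\<not> (\<exists>Z\<subseteq>N. {} \<subset> Z \<and> Z \<subset> W)"
    proof
      assume "\<exists>Z\<subseteq>N. {} \<subset> Z \<and> Z \<subset> W"
      then obtain Z where Z: "Z \<subseteq> N" "{} \<subset> Z" "Z \<subset> W" by auto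
      have "fT Z \<in> Ts" using Z unfolding Ts_def by auto
      moreover have "fT {} \<subset> fT Z" "fT Z \<subset> fT W" using Z W le_TT by (auto simp: psubset_eq)
      ultimately show False using c W unfolding covers_in_def by auto
    qed
    ultimately show ?thesis by auto
  qed
  then have "\<exists>j\<in>N. W = {j}" by (rule iffD1[OF pow_bot[OF W(1)]])
  then obtain j where "j \<in> N" "W = {j}" by (rule bexE)
  then show "t \<in> (\<lambda>i. fT {i}) ` N" using W by blast
next
  fix t assume "t \<in> (\<lambda>i. fT {i}) ` N"
  then obtain i where i: "i \<in> N" "t = fT {i}" by auto
  have "\<exists>j\<in>N. {i} = {j}" using i by blast
  then have "{} \<subset> {i} \<and> \<not> (\<exists>Z\<subseteq>N. {} \<subset> Z \<and> Z \<subset> {i})"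
    by (rule iffD2[OF pow_bot[of "{i}"], rotated]) (use i in auto)
  then show "t \<in> {t. covers_in Ts (fT {}) t}"
    unfolding covers_in_def Ts_def using i le_TT by (auto simp: psubset_eq)
qed

lemma bij_phi: "bij_betw phi Ms {b. covers_in Bs b (fB N)}"
  unfolding covB_top Ms_def
proof (rule bij_betw_imageI)
  show "inj_on phi (mM ` N)"
    by (auto simp: inj_on_def phi_mM)
  have "phi ` mM ` N = (\<lambda>i. phi (mM i)) ` N" by (simp add: image_image)
  also have "\<dots> = (\<lambda>i. fB (N - {i})) ` N" by (rule image_cong) (simp_all add: phi_mM)
  finally show "phi ` mM ` N = (\<lambda>i. fB (N - {i})) ` N" .
qed

lemma bij_psi: "bij_betw psi Ms {t. covers_in Ts (fT {}) t}"
  unfolding covT_bot Ms_def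
proof (rule bij_betw_imageI)
  show "inj_on psi (mM ` N)"
    by (auto simp: inj_on_def psi_mM)
  have "psi ` mM ` N = (\<lambda>i. psi (mM i)) ` N" by (simp add: image_image)
  also have "\<dots> = (\<lambda>i. fT {i}) ` N" by (rule image_cong) (simp_all add: psi_mM)
  finally show "psi ` mM ` N = (\<lambda>i. fT {i}) ` N" .
qed

abbreviation "TrS \<equiv> {R. ts S R}"

lemma memB: "V \<subseteq> N \<Longrightarrow> fB V \<in> TrS" unfolding Tr_eq Bs_def by auto
lemma memM: "i \<in> N \<Longrightarrow> mM i \<in> TrS" unfolding Tr_eq Ms_def by auto
lemma memT: "V \<subseteq> N \<Longrightarrow> fT V \<in> TrS" unfolding Tr_eq Ts_def by auto

lemma cov_sub: "covers_in A x y \<Longrightarrow> A' \<subseteq> A \<Longrightarrow> x \<in> A' \<Longrightarrow> y \<in> A' \<Longrightarrow> covers_in A' x y"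
  unfolding covers_in_def by blast

lemma cov_Tr_D:
  assumes c: "covers_in TrS x y"
  shows "covers_in Bs x y \<or> covers_in Ts x y \<or> (\<exists>i\<in>N. x = fB (N - {i}) \<and> y = mM i)
    \<or> (\<exists>i\<in>N. x = mM i \<and> y = fT {i}) \<or> (x = fB N \<and> y = fT {})"
proof -
  have xT: "x \<in> TrS" and yT: "y \<in> TrS" and xy: "x \<subseteq> y" "x \<noteq> y" using c unfolding covers_in_def by auto
  have nb: "\<And>z. z \<in> TrS \<Longrightarrow> x \<subseteq> z \<Longrightarrow> x \<noteq> z \<Longrightarrow> z \<subseteq> y \<Longrightarrow> z \<noteq> y \<Longrightarrow> False"
    using c unfolding covers_in_def by auto
  have BT: "Bs \<subseteq> TrS" "Ts \<subseteq> TrS" unfolding Tr_eq by auto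
  show ?thesis
  proof (cases rule: Tr_cases[OF xT])
    case (1 U)
    show ?thesis
    proof (cases rule: Tr_cases[OF yT])
      case (1 U')
      have "covers_in Bs x y" by (rule cov_sub[OF c BT(1)]) (use \<open>U \<subseteq> N\<close> \<open>x = fB U\<close> 1 in \<open>auto simp: Bs_def\<close>)
      then show ?thesis by blast
    next
      case (2 i)
      have sub: "U \<subseteq> N - {i}" using xy \<open>U \<subseteq> N\<close> \<open>x = fB U\<close> 2 by simp
      have "U = N - {i}"
      proof (rule ccontr)
        assume ne: "U \<noteq> N - {i}"
        show False
          by (rule nb[of "fB (N - {i})"]) (use sub ne \<open>U \<subseteq> N\<close> \<open>x = fB U\<close> 2 memB in auto)
      qed
      then show ?thesis using \<open>x = fB U\<close> 2 by blast
    next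
      case (3 W)
      have "U = N"
      proof (rule ccontr)
        assume ne: "U \<noteq> N"
        show False
          by (rule nb[of "fB N"]) (use ne \<open>U \<subseteq> N\<close> \<open>x = fB U\<close> 3 memB in auto)
      qed
      moreover have "W = {}"
      proof (rule ccontr)
        assume ne: "W \<noteq> {}"
        show False
          by (rule nb[of "fT {}"]) (use ne \<open>U \<subseteq> N\<close> \<open>x = fB U\<close> 3 memT in auto)
      qed
      ultimately show ?thesis using \<open>x = fB U\<close> 3 by blast
    qed
  next
    case (2 i)
    show ?thesis
    proof (cases rule: Tr_cases[OF yT])
      case (1 U)
      then show ?thesis using xy \<open>x = mM i\<close> \<open>i \<in> N\<close> by simp
    next
      case (2 j)
      then show ?thesis using xy \<open>x = mM i\<close> \<open>i \<in> N\<close> by simp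
    next
      case (3 W)
      have iW: "i \<in> W" using xy \<open>x = mM i\<close> \<open>i \<in> N\<close> 3 by simp
      have "W = {i}"
      proof (rule ccontr)
        assume ne: "W \<noteq> {i}"
        show False
          by (rule nb[of "fT {i}"]) (use ne iW \<open>i \<in> N\<close> \<open>x = mM i\<close> 3 memT in auto)
      qed
      then show ?thesis using \<open>x = mM i\<close> \<open>i \<in> N\<close> 3 by blast
    qed
  next
    case (3 W)
    show ?thesis
    proof (cases rule: Tr_cases[OF yT])
      case (1 U)
      then show ?thesis using xy \<open>x = fT W\<close> \<open>W \<subseteq> N\<close> by simp
    next
      case (2 j)
      then show ?thesis using xy \<open>x = fT W\<close> \<open>W \<subseteq> N\<close> by simp
    next
      case (3 W')
      have "covers_in Ts x y" by (rule cov_sub[OF c BT(2)]) (use \<open>W \<subseteq> N\<close> \<open>x = fT W\<close> 3 in \<open>auto simp: Ts_def\<close>)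
      then show ?thesis by blast
    qed
  qed
qed

lemma cov_Tr_I:
  assumes h: "covers_in Bs x y \<or> covers_in Ts x y \<or> (\<exists>i\<in>N. x = fB (N - {i}) \<and> y = mM i)
    \<or> (\<exists>i\<in>N. x = mM i \<and> y = fT {i}) \<or> (x = fB N \<and> y = fT {})"
  shows "covers_in TrS x y"
proof -
  have key: "covers_in TrS x y" if xT: "x \<in> TrS" and yT: "y \<in> TrS" and xy: "x \<subseteq> y" "x \<noteq> y"
     and nb: "\<And>z. z \<in> TrS \<Longrightarrow> x \<subseteq> z \<Longrightarrow> x \<noteq> z \<Longrightarrow> z \<subseteq> y \<Longrightarrow> z \<noteq> y \<Longrightarrow> False"
    using that unfolding covers_in_def by blast
  from h show ?thesis
  proof (elim disjE)
    assume c: "covers_in Bs x y"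
    then obtain U U' where U: "U \<subseteq> N" "x = fB U" "U' \<subseteq> N" "y = fB U'" unfolding covers_in_def Bs_def by blast
    show ?thesis
    proof (rule key)
      show "x \<in> TrS" "y \<in> TrS" using U memB by auto
      show "x \<subseteq> y" "x \<noteq> y" using c unfolding covers_in_def by auto
    next
      fix z assume z: "z \<in> TrS" "x \<subseteq> z" "x \<noteq> z" "z \<subseteq> y" "z \<noteq> y"
      show False
      proof (cases rule: Tr_cases[OF z(1)])
        case (1 V)
        then have "fB V \<in> Bs" unfolding Bs_def by auto
        then show False using c z 1 unfolding covers_in_def by auto
      next
        case (2 j) then show False using z U by simp
      next
        case (3 V) then show False using z U by simp
      qed
    qed
  next
    assume c: "covers_in Ts x y"
    then obtain W W' where W: "W \<subseteq> N" "x = fT W" "W' \<subseteq> N" "y = fT W'" unfolding covers_in_def Ts_def by blast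
    show ?thesis
    proof (rule key)
      show "x \<in> TrS" "y \<in> TrS" using W memT by auto
      show "x \<subseteq> y" "x \<noteq> y" using c unfolding covers_in_def by auto
    next
      fix z assume z: "z \<in> TrS" "x \<subseteq> z" "x \<noteq> z" "z \<subseteq> y" "z \<noteq> y"
      show False
      proof (cases rule: Tr_cases[OF z(1)])
        case (3 V)
        then have "fT V \<in> Ts" unfolding Ts_def by auto
        then show False using c z 3 unfolding covers_in_def by auto
      next
        case (2 j) then show False using z W by simp
      next
        case (1 V) then show False using z W by simp
      qed
    qed
  next
    assume "\<exists>i\<in>N. x = fB (N - {i}) \<and> y = mM i"
    then obtain i where i: "i \<in> N" "x = fB (N - {i})" "y = mM i" by blast
    show ?thesis
    proof (rule key)
      show "x \<in> TrS" "y \<in> TrS" using i memB memM by auto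
      show "x \<subseteq> y" "x \<noteq> y" using i by auto
    next
      fix z assume z: "z \<in> TrS" "x \<subseteq> z" "x \<noteq> z" "z \<subseteq> y" "z \<noteq> y"
      show False
      proof (cases rule: Tr_cases[OF z(1)])
        case (1 V) then show False using z i by auto
      next
        case (2 j) then show False using z i by simp
      next
        case (3 V) then show False using z i by simp
      qed
    qed
  next
    assume "\<exists>i\<in>N. x = mM i \<and> y = fT {i}"
    then obtain i where i: "i \<in> N" "x = mM i" "y = fT {i}" by blast
    show ?thesis
    proof (rule key)
      show "x \<in> TrS" "y \<in> TrS" using i memT memM by auto
      show "x \<subseteq> y" "x \<noteq> y" using i by auto
    next
      fix z assume z: "z \<in> TrS" "x \<subseteq> z" "x \<noteq> z" "z \<subseteq> y" "z \<noteq> y"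
      show False
      proof (cases rule: Tr_cases[OF z(1)])
        case (1 V) then show False using z i by simp
      next
        case (2 j) then show False using z i by simp
      next
        case (3 V) then show False using z i by auto
      qed
    qed
  next
    assume i: "x = fB N \<and> y = fT {}"
    show ?thesis
    proof (rule key)
      show "x \<in> TrS" "y \<in> TrS" using i memT memB by auto
      show "x \<subseteq> y" "x \<noteq> y" using i by auto
    next
      fix z assume z: "z \<in> TrS" "x \<subseteq> z" "x \<noteq> z" "z \<subseteq> y" "z \<noteq> y"
      show False
      proof (cases rule: Tr_cases[OF z(1)])
        case (1 V) then show False using z i by auto
      next
        case (2 j) then show False using z i by auto
      next
        case (3 V) then show False using z i by auto
      qed
    qed
  qed
qed

theorem main:
  "card TrS = 2 ^ (p + 2) + p + 1 \<and>
    (\<exists>B M T fB fT \<phi> \<psi>.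
       B \<union> M \<union> T = TrS \<and> B \<inter> M = {} \<and> B \<inter> T = {} \<and> M \<inter> T = {} \<and>
       bool_iso p fB B \<and> bool_iso p fT T \<and> card M = p + 1 \<and>
       bij_betw \<phi> M {b. covers_in B b (fB {0..p})} \<and>
       bij_betw \<psi> M {t. covers_in T (fT {}) t} \<and>
       {(x, y). covers_in TrS x y} =
         {(x, y). covers_in B x y} \<union> {(x, y). covers_in T x y}
         \<union> {(\<phi> m, m) | m. m \<in> M} \<union> {(m, \<psi> m) | m. m \<in> M}
         \<union> {(fB {0..p}, fT {})})"
proof -
  have covs: "{(x, y). covers_in TrS x y} =
         {(x, y). covers_in Bs x y} \<union> {(x, y). covers_in Ts x y}
         \<union> {(phi m, m) | m. m \<in> Ms} \<union> {(m, psi m) | m. m \<in> Ms}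
         \<union> {(fB N, fT {})}"
  proof -
    have A: "{(phi m, m) | m. m \<in> Ms} = {(x, y). \<exists>i\<in>N. x = fB (N - {i}) \<and> y = mM i}"
      unfolding Ms_def using phi_mM by auto
    have B: "{(m, psi m) | m. m \<in> Ms} = {(x, y). \<exists>i\<in>N. x = mM i \<and> y = fT {i}}"
      unfolding Ms_def using psi_mM by auto
    have iff: "\<And>x y. covers_in TrS x y \<longleftrightarrow> (covers_in Bs x y \<or> covers_in Ts x y \<or> (\<exists>i\<in>N. x = fB (N - {i}) \<and> y = mM i)
    \<or> (\<exists>i\<in>N. x = mM i \<and> y = fT {i}) \<or> (x = fB N \<and> y = fT {}))"
      by (rule iffI, erule cov_Tr_D, erule cov_Tr_I)
    show ?thesis unfolding A B
    proof (rule Set.set_eqI)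
      fix z :: "('a set \<times> 'a set) set \<times> ('a set \<times> 'a set) set"
      obtain x y where z: "z = (x, y)" by fastforce
      show "z \<in> {(x, y). covers_in TrS x y} \<longleftrightarrow> z \<in> {(x, y). covers_in Bs x y} \<union> {(x, y). covers_in Ts x y} \<union>
        {(x, y). \<exists>i\<in>N. x = fB (N - {i}) \<and> y = mM i} \<union> {(x, y). \<exists>i\<in>N. x = mM i \<and> y = fT {i}} \<union> {(fB N, fT {})}"
        unfolding z by (simp only: iff mem_Collect_eq case_prod_conv Un_iff singleton_iff prod.inject disj_assoc)
    qed
  qed
  show ?thesis
    using card_Tr Tr_eq disj iso_B iso_T card_M bij_phi bij_psi covs by blast
qed

end


definition Ln :: "nat \<Rightarrow> nat \<Rightarrow> (int \<times> int) set" where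
  "Ln p i = (if i < p then (\<lambda>x. (x, (int i * x) mod int p)) ` {0..<int p} else (\<lambda>y. (0, y)) ` {0..<int p})"

context
  fixes p :: nat
  assumes pr: "Factorial_Ring.prime p"
begin

private abbreviation "G \<equiv> Cp2 p"
private abbreviation "q \<equiv> int p"

lemma p_pos: "p > 1" using pr prime_gt_1_nat by blast

lemma grp: "group G"
  unfolding Cp2_def by (intro DirProd_group group_integer_mod_group)

lemma carr: "carrier G = {0..<q} \<times> {0..<q}"
  using p_pos unfolding Cp2_def by (simp add: carrier_integer_mod_group)

lemma one_G: "\<one>\<^bsub>G\<^esub> = (0, 0)"
  unfolding Cp2_def by simp

lemma mult_G: "(a, b) \<otimes>\<^bsub>G\<^esub> (c, d) = ((a + c) mod q, (b + d) mod q)"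
  unfolding Cp2_def by simp

lemma inv_G: "(a, b) \<in> carrier G \<Longrightarrow> inv\<^bsub>G\<^esub> (a, b) = ((- a) mod q, (- b) mod q)"
  unfolding Cp2_def by (simp add: inv_DirProd)

lemma order_G: "order G = p * p"
  unfolding order_def carr by simp

lemma Ln_sub: "Ln p i \<subseteq> carrier G"
  unfolding carr Ln_def using p_pos by auto

lemma Ln_zero: "(0, 0) \<in> Ln p i"
  unfolding Ln_def using p_pos by (auto simp: image_iff)

lemma Ln_subgroup: "subgroup (Ln p i) G"
proof (rule group.subgroupI[OF grp])
  show "Ln p i \<subseteq> carrier G" by (rule Ln_sub)
  show "Ln p i \<noteq> {}" using Ln_zero by auto
next
  fix a assume a: "a \<in> Ln p i"
  have aG: "a \<in> carrier G" using a Ln_sub by auto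
  show "inv\<^bsub>G\<^esub> a \<in> Ln p i"
  proof (cases "i < p")
    case True
    then obtain x where x: "x \<in> {0..<q}" "a = (x, (int i * x) mod q)" using a unfolding Ln_def by auto
    have "inv\<^bsub>G\<^esub> a = ((- x) mod q, (- ((int i * x) mod q)) mod q)" using inv_G aG x by simp
    also have "(- ((int i * x) mod q)) mod q = (int i * ((- x) mod q)) mod q"
      by (simp add: mod_minus_eq mod_mult_right_eq)
    finally have "inv\<^bsub>G\<^esub> a = ((- x) mod q, (int i * ((- x) mod q)) mod q)" .
    moreover have "(- x) mod q \<in> {0..<q}" using p_pos by simp
    ultimately show ?thesis using True unfolding Ln_def by auto
  next
    case False
    then obtain y where y: "y \<in> {0..<q}" "a = (0, y)" using a unfolding Ln_def by auto
    have "inv\<^bsub>G\<^esub> a = (0, (- y) mod q)" using inv_G aG y by simp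
    moreover have "(- y) mod q \<in> {0..<q}" using p_pos by simp
    ultimately show ?thesis using False unfolding Ln_def by auto
  qed
next
  fix a b assume a: "a \<in> Ln p i" and b: "b \<in> Ln p i"
  show "a \<otimes>\<^bsub>G\<^esub> b \<in> Ln p i"
  proof (cases "i < p")
    case True
    then obtain x y where x: "a = (x, (int i * x) mod q)" and y: "b = (y, (int i * y) mod q)"
      using a b unfolding Ln_def by auto
    have "a \<otimes>\<^bsub>G\<^esub> b = ((x + y) mod q, ((int i * x) mod q + (int i * y) mod q) mod q)"
      using x y mult_G by simp
    also have "((int i * x) mod q + (int i * y) mod q) mod q = (int i * ((x + y) mod q)) mod q"
      by (simp add: mod_add_eq mod_mult_right_eq distrib_left)
    finally have "a \<otimes>\<^bsub>G\<^esub> b = ((x + y) mod q, (int i * ((x + y) mod q)) mod q)" .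
    moreover have "(x + y) mod q \<in> {0..<q}" using p_pos by simp
    ultimately show ?thesis using True unfolding Ln_def by auto
  next
    case False
    then obtain x y where x: "a = (0, x)" "x \<in> {0..<q}" and y: "b = (0, y)" "y \<in> {0..<q}"
      using a b unfolding Ln_def by auto
    have "a \<otimes>\<^bsub>G\<^esub> b = (0, (x + y) mod q)"
      using x y mult_G by simp
    moreover have "(x + y) mod q \<in> {0..<q}" using p_pos by simp
    ultimately show ?thesis using False unfolding Ln_def by auto
  qed
qed

lemma Ln_card: "card (Ln p i) = p"
proof (cases "i < p")
  case True
  have "card ((\<lambda>x. (x, (int i * x) mod q)) ` {0..<q}) = card {0..<q}"
    by (rule card_image) (auto simp: inj_on_def)
  then show ?thesis using True unfolding Ln_def by simp
next
  case False
  have "card ((\<lambda>y. (0::int, y)) ` {0..<q}) = card {0..<q}"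
    by (rule card_image) (auto simp: inj_on_def)
  then show ?thesis using False unfolding Ln_def by simp
qed

lemma Ln_cover:
  assumes ab: "(a, b) \<in> carrier G" and nz: "(a, b) \<noteq> (0, 0)"
  shows "\<exists>i\<le>p. (a, b) \<in> Ln p i"
proof (cases "a = 0")
  case True
  then have "(a, b) \<in> Ln p p" using ab unfolding Ln_def carr by auto
  then show ?thesis by auto
next
  case False
  have a: "0 < a" "a < q" using ab False unfolding carr by auto
  have b: "0 \<le> b" "b < q" using ab unfolding carr by auto
  have "coprime a q"
  proof -
    have "Factorial_Ring.prime q" using pr by simp
    moreover have "\<not> q dvd a" using a zdvd_not_zless by auto
    ultimately show ?thesis by (metis prime_imp_coprime coprime_commute)
  qed
  then obtain c where c: "[a * c = 1] (mod q)" using cong_solve_coprime_int by blast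
  define i where "i = nat ((c * b) mod q)"
  have i: "i < p" unfolding i_def using p_pos by (simp add: nat_less_iff)
  have "(int i * a) mod q = ((c * b) mod q * a) mod q" unfolding i_def using p_pos by simp
  also have "\<dots> = (b * (a * c)) mod q" by (metis mod_mult_left_eq mult.commute mult.left_commute)
  also have "\<dots> = (b * 1) mod q" using c unfolding cong_def by (metis mod_mult_right_eq)
  also have "\<dots> = b" using b by simp
  finally have "(int i * a) mod q = b" .
  then have "(a, b) \<in> Ln p i" unfolding Ln_def using i a by (auto simp: image_iff)
  moreover have "i \<le> p" using i by simp
  ultimately show ?thesis by blast
qed

lemma Ln_distinct:
  assumes "i \<le> p" "j \<le> p" "i \<noteq> j"
  shows "Ln p i \<noteq> Ln p j"
proof -
  have w: "\<And>k. k < p \<Longrightarrow> (1, int k) \<in> Ln p k"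
  proof -
    fix k assume k: "k < p"
    have "(int k * 1) mod q = int k" using k by simp
    then show "(1, int k) \<in> Ln p k" unfolding Ln_def using k p_pos by (auto simp: image_iff intro!: bexI[of _ 1])
  qed
  have w2: "(0, 1) \<in> Ln p p" unfolding Ln_def using p_pos by auto
  have n1: "\<And>k l. k < p \<Longrightarrow> l \<le> p \<Longrightarrow> (1, int k) \<in> Ln p l \<Longrightarrow> k = l"
    unfolding Ln_def using p_pos by (auto split: if_splits)
  have n2: "\<And>l. l < p \<Longrightarrow> (0, 1) \<notin> Ln p l"
    unfolding Ln_def using p_pos by auto
  show ?thesis
  proof
    assume eq: "Ln p i = Ln p j"
    show False
    proof (cases "i < p")
      case True
      then have "(1, int i) \<in> Ln p j" using w eq by auto
      then show False using n1 True assms by auto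
    next
      case False
      then have "i = p" using assms by auto
      then have "j < p" using assms by auto
      then show False using w2 n2 eq \<open>i = p\<close> by auto
    qed
  qed
qed

lemma sub_card:
  assumes H: "subgroup H G"
  shows "card H = 1 \<or> card H = p \<or> card H = p * p"
proof -
  have "card (rcosets\<^bsub>G\<^esub> H) * card H = p ^ 2"
    using group.lagrange[OF grp H] order_G by (simp add: power2_eq_square)
  then have "card H dvd p ^ 2" by (metis dvd_triv_right)
  then obtain k where "k \<le> 2" "card H = p ^ k" using divides_primepow_nat[OF pr] by blast
  then show ?thesis by (cases k) (auto simp: numeral_2_eq_2 le_Suc_eq power2_eq_square)
qed

lemma finH: "subgroup H G \<Longrightarrow> finite H"
  using subgroup.subset[of H G] carr by (auto intro: finite_subset)

lemma atom_eq:
  assumes H: "subgroup H G" and K: "subgroup K G" and cH: "card H = p" and cK: "card K = p"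
    and h: "h \<in> H" "h \<in> K" "h \<noteq> (0, 0)"
  shows "H = K"
proof -
  have HK: "subgroup (H \<inter> K) G" using group.subgroups_Inter_pair[OF grp H K] .
  have "{(0, 0), h} \<subseteq> H \<inter> K" using h subgroup.one_closed[OF H] subgroup.one_closed[OF K] one_G by auto
  then have "card {(0::int, 0::int), h} \<le> card (H \<inter> K)" using finH[OF HK] by (rule card_mono[rotated])
  then have ge: "2 \<le> card (H \<inter> K)" using h by simp
  have le: "card (H \<inter> K) \<le> p" using card_mono[OF finH[OF H], of "H \<inter> K"] cH by auto
  have "card (H \<inter> K) = p" using sub_card[OF HK] ge le p_pos
    by (metis le_antisym mult_le_cancel2 nat_mult_le_cancel_disj not_le one_less_numeral_iff semiring_norm(76)
        le_square mult.right_neutral one_le_numeral order.trans)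
  then have "H \<inter> K = H" "H \<inter> K = K"
    using card_subset_eq[OF finH[OF H], of "H \<inter> K"] card_subset_eq[OF finH[OF K], of "H \<inter> K"] cH cK by auto
  then show ?thesis by auto
qed

lemma classify:
  assumes H: "subgroup H G"
  shows "H = {(0, 0)} \<or> H = carrier G \<or> (\<exists>i\<le>p. H = Ln p i)"
proof -
  have one: "(0, 0) \<in> H" using subgroup.one_closed[OF H] one_G by simp
  have fin: "finite H" by (rule finH[OF H])
  consider "card H = 1" | "card H = p" | "card H = p * p" using sub_card[OF H] by blast
  then show ?thesis
  proof cases
    case 1
    then have "H = {(0, 0)}" using one fin by (metis card_1_singletonE singletonD)
    then show ?thesis by blast
  next
    case 3
    have "card (carrier G) = p * p" using order_G unfolding order_def .
    then have "H = carrier G" using card_subset_eq[of "carrier G" H] subgroup.subset[OF H] 3 carr by auto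
    then show ?thesis by blast
  next
    case 2
    have "H \<noteq> {(0, 0)}" using 2 p_pos by auto
    then obtain h where h: "h \<in> H" "h \<noteq> (0, 0)" using one by blast
    obtain a b where ab: "h = (a, b)" by fastforce
    have "h \<in> carrier G" using h subgroup.subset[OF H] by auto
    then obtain i where i: "i \<le> p" "h \<in> Ln p i" using Ln_cover h ab by blast
    have "H = Ln p i" by (rule atom_eq[OF H Ln_subgroup 2 Ln_card h(1) i(2) h(2)])
    then show ?thesis using i by blast
  qed
qed

lemma comm_G: "x \<in> carrier G \<Longrightarrow> y \<in> carrier G \<Longrightarrow> x \<otimes>\<^bsub>G\<^esub> y = y \<otimes>\<^bsub>G\<^esub> x"
  by (cases x, cases y) (simp add: mult_G add.commute)

lemma conj_triv: "subgroup H G \<Longrightarrow> x \<in> carrier G \<Longrightarrow> conj_set G x H = H"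
proof -
  assume H: "subgroup H G" and x: "x \<in> carrier G"
  have "\<And>h. h \<in> H \<Longrightarrow> x \<otimes>\<^bsub>G\<^esub> h \<otimes>\<^bsub>G\<^esub> inv\<^bsub>G\<^esub> x = h"
  proof -
    fix h assume "h \<in> H"
    then have h: "h \<in> carrier G" using subgroup.subset[OF H] by auto
    interpret GG: group G by (rule grp)
    have "x \<otimes>\<^bsub>G\<^esub> h \<otimes>\<^bsub>G\<^esub> inv\<^bsub>G\<^esub> x = h \<otimes>\<^bsub>G\<^esub> x \<otimes>\<^bsub>G\<^esub> inv\<^bsub>G\<^esub> x"
      using comm_G[OF x h] by simp
    also have "\<dots> = h \<otimes>\<^bsub>G\<^esub> (x \<otimes>\<^bsub>G\<^esub> inv\<^bsub>G\<^esub> x)"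
      using GG.m_assoc[OF h x GG.inv_closed[OF x]] .
    also have "\<dots> = h" using GG.r_inv[OF x] GG.r_one[OF h] by simp
    finally show "x \<otimes>\<^bsub>G\<^esub> h \<otimes>\<^bsub>G\<^esub> inv\<^bsub>G\<^esub> x = h" .
  qed
  then show "conj_set G x H = H" unfolding conj_set_def by simp
qed

lemma Sub_eq: "Sub G = {{(0, 0)}, carrier G} \<union> Ln p ` {0..p}"
proof (intro Set.set_eqI iffI)
  fix H assume "H \<in> Sub G"
  then have "subgroup H G" unfolding Sub_def by simp
  then have "H = {(0, 0)} \<or> H = carrier G \<or> (\<exists>i\<le>p. H = Ln p i)" by (rule classify)
  then show "H \<in> {{(0, 0)}, carrier G} \<union> Ln p ` {0..p}" by auto
next
  fix H assume "H \<in> {{(0, 0)}, carrier G} \<union> Ln p ` {0..p}"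
  moreover have "subgroup {(0, 0)} G" using group.triv_subgroup[OF grp] one_G by simp
  moreover have "subgroup (carrier G) G" using group.subgroup_self[OF grp] .
  ultimately show "H \<in> Sub G" unfolding Sub_def using Ln_subgroup by auto
qed

lemma tsys_inst: "tsys (Sub G) {(0, 0)} (carrier G) (Ln p) p"
proof
  show "Sub G = {{(0, 0)}, carrier G} \<union> Ln p ` {0..p}" by (rule Sub_eq)
  show "inj_on (Ln p) {0..p}"
  proof (rule inj_onI)
    fix x y assume "x \<in> {0..p}" "y \<in> {0..p}" "Ln p x = Ln p y"
    then show "x = y" using Ln_distinct[of x y] by auto
  qed
next
  fix i assume "i \<le> p"
  show "{(0, 0)} \<subseteq> Ln p i \<and> {(0, 0)} \<noteq> Ln p i"
  proof
    show "{(0, 0)} \<subseteq> Ln p i" using Ln_zero by auto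
    show "{(0, 0)} \<noteq> Ln p i"
    proof
      assume eq: "{(0, 0)} = Ln p i"
      have "card (Ln p i) = card {(0::int, 0::int)}" by (simp only: eq)
      then have "p = 1" using Ln_card[of i] by simp
      then show False using p_pos by simp
    qed
  qed
next
  fix i assume "i \<le> p"
  have "card (carrier G) = p * p" using order_G unfolding order_def .
  then show "Ln p i \<subseteq> carrier G \<and> Ln p i \<noteq> carrier G"
    using Ln_sub Ln_card[of i] p_pos by auto
next
  fix i j assume ij: "i \<le> p" "j \<le> p" "i \<noteq> j"
  show "Ln p i \<inter> Ln p j = {(0, 0)}"
  proof
    show "{(0, 0)} \<subseteq> Ln p i \<inter> Ln p j" using Ln_zero by auto
    show "Ln p i \<inter> Ln p j \<subseteq> {(0, 0)}"
    proof
      fix h assume h: "h \<in> Ln p i \<inter> Ln p j"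
      show "h \<in> {(0, 0)}"
      proof (rule ccontr)
        assume "h \<notin> {(0, 0)}"
        then have hz: "h \<noteq> (0, 0)" by auto
        have "h \<in> Ln p i" "h \<in> Ln p j" using h by auto
        then have "Ln p i = Ln p j" using atom_eq[OF Ln_subgroup Ln_subgroup Ln_card Ln_card _ _ hz] by blast
        then show False using Ln_distinct ij by blast
      qed
    qed
  qed
qed

lemma GTS_iff: "G_transfer_system G R \<longleftrightarrow> ts (Sub G) R"
proof
  assume "G_transfer_system G R" then show "ts (Sub G) R" unfolding G_transfer_system_def ts_def
    by (elim conjE) (intro conjI; assumption)
next
  assume t: "ts (Sub G) R"
  have "\<And>H K x. (H, K) \<in> R \<Longrightarrow> x \<in> carrier G \<Longrightarrow> (conj_set G x H, conj_set G x K) \<in> R"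
  proof -
    fix H K x assume hk: "(H, K) \<in> R" and x: "x \<in> carrier G"
    then have "H \<in> Sub G" "K \<in> Sub G" using t unfolding ts_def by auto
    then show "(conj_set G x H, conj_set G x K) \<in> R" using conj_triv x hk unfolding Sub_def by auto
  qed
  then show "G_transfer_system G R" using t unfolding G_transfer_system_def ts_def
    by (elim conjE) (intro conjI; (assumption | blast))
qed

lemma Tr_G: "Tr G = {R. ts (Sub G) R}"
  unfolding Tr_def using GTS_iff by auto

end

theorem theorem5p4:
  fixes p :: nat
  assumes "Factorial_Ring.prime p"
  shows "card (Tr (Cp2 p)) = 2 ^ (p + 2) + p + 1 \<and>
    (\<exists>B M T fB fT \<phi> \<psi>.
       B \<union> M \<union> T = Tr (Cp2 p) \<and> B \<inter> M = {} \<and> B \<inter> T = {} \<and> M \<inter> T = {} \<and>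
       bool_iso p fB B \<and> bool_iso p fT T \<and> card M = p + 1 \<and>
       bij_betw \<phi> M {b. covers_in B b (fB {0..p})} \<and>
       bij_betw \<psi> M {t. covers_in T (fT {}) t} \<and>
       {(x, y). covers_in (Tr (Cp2 p)) x y} =
         {(x, y). covers_in B x y} \<union> {(x, y). covers_in T x y}
         \<union> {(\<phi> m, m) | m. m \<in> M} \<union> {(m, \<psi> m) | m. m \<in> M}
         \<union> {(fB {0..p}, fT {})})"
proof -
  interpret tsys "Sub (Cp2 p)" "{(0, 0)}" "carrier (Cp2 p)" "Ln p" p
    by (rule tsys_inst[OF assms])
  show ?thesis unfolding Tr_G[OF assms] by (rule main)
qed

end
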